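(* Let $T$ be a lifted graph, $F\colon T\to T$ a continuous sun-like map of degree 1 with branches $(X^i)_{i\in\Lambda}$, ${\cal P}=\{X^i_j\}$ a basic partition of $F$ and ${\cal G}$ its covering graph. Let $\alpha,\beta$ be vertices of ${\cal G}$ with an arrow $\alpha\to\beta$. Then there exist $A_0,\dots,A_n,A_{n+1}\in{\cal P}$ and $k\in\{1,\dots,N_{\ell(A_n)}\}$ such that $\alpha=A_0\dots A_n/\!\sim$, $\beta=A_0\dots A_nA_{n+1}/\!\sim$ and $A_{n+1}=X^{\ell(A_n)}_k$. Moreover, for all $j\in\{1,\dots,k-1\}$, $\langle\alpha\rangle$ positively $F$-covers $X^{\ell(A_n)}_j+p(A_n)$, and $\alpha\to X^{\ell(A_n)}_j$ is an arrow in ${\cal G}$.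
   Context: A lifted graph is a connected topological space $T$ with a homeomorphism $h\colon\mathbb R\to h(\mathbb R)\subset T$ and a homeomorphism $\tau\colon T\to T$ such that $\tau(h(x))=h(x+1)$, the closure of each connected component of $T\setminus h(\mathbb R)$ is a topological finite graph meeting $h(\mathbb R)$ in exactly one point, and only finitely many such components have closure meeting $h([0,1])$. Identify $h(\mathbb R)$ with $\mathbb R$, write $x+m:=\tau^m(x)$; $r_{\mathbb R}\colon T\to\mathbb R$ is the identity on $\mathbb R$ and maps a component $C$ of $T\setminus\mathbb R$ to the point $\overline C\cap\mathbb R$. $F$ has degree 1 if $F(x+1)=F(x)+1$. Let $T_{\mathbb R}:=\overline{\bigcup_{n\ge0}F^n(\mathbb R)}$, $X:=\overline{T\setminus T_{\mathbb R}}\cap r_{\mathbb R}^{-1}([0,1))$. $F$ is sun-like if $(T\setminus T_{\mathbb R})\cap r_{\mathbb R}^{-1}([0,1))$ consists of finitely many intervals with pairwise disjoint closures $X^i$, $i\in\Lambda$ (branches), each a compact interval meeting $T_{\mathbb R}$ in one endpoint $\min X^i$ (fixing the order of $X^i$). For $j\in\Lambda$, $r_j\colon T\to X^j$ is $r_j(x)=x$ for $x\in X^j$ and $r_j(x)=\min X^j$ otherwise. Positive covering: for nonempty compact intervals $I\subset X^i$, $J\subset X^j$, $n\ge1$, $p\in\mathbb Z$, $I$ positively $F^n$-covers $J+p$ if there exist $x\le y$ in $I$ with $r_j(F^n(x)-p)\le\min J$ and $\max J\le r_j(F^n(y)-p)$ (order of $X^j$). A basic partition is a finite family ${\cal P}=\{X^i_j: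 i\in\Lambda, 1\le j\le N_i\}$ of pairwise disjoint nonempty compact intervals $X^i_1<\dots<X^i_{N_i}$ in $X^i$, with $\ell(X^i_j)\in\Lambda$, $p(X^i_j)\in\mathbb Z$, such that $F(X^i_j)\subset(X^{\ell(X^i_j)}+p(X^i_j))\cup\mathrm{Int}(T_{\mathbb R})$, $F(\min X^i_j)=\min X^{\ell(X^i_j)}+p(X^i_j)$, and $F(X\setminus\bigcup X^i_j)\cap(X+\mathbb Z)=\emptyset$. For $A_0,\dots,A_n\in{\cal P}$, $\langle A_0\dots A_n\rangle:=F^n(\{x\in T: F^i(x)\in A_i+\mathbb Z,\ 0\le i\le n\})\cap X$. $A_0\dots A_n\sim B_0\dots B_m$ iff for some $k\le\min(n,m)$, $A_{n-i}=B_{m-i}$ ($0\le i\le k$) and $\langle A_0\dots A_{n-k}\rangle=A_{n-k}=B_{m-k}=\langle B_0\dots B_{m-k}\rangle$. The covering graph ${\cal G}$: vertices are classes $A_0\dots A_n/\!\sim$ with $\langle A_0\dots A_n\rangle\ne\emptyset$; arrow $\alpha\to\beta$ iff $\alpha=A_0\dots A_n/\!\sim$, $\beta=A_0\dots A_nA_{n+1}/\!\sim$ for some $A_i\in{\cal P}$. For $B\in{\cal P}$, the vertex $B/\!\sim$ is denoted $B$. *)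

theory Defs
  imports "HOL-Analysis.Analysis"
begin

definition fin_graph :: "'a topology \<Rightarrow> bool" where
  "fin_graph Y \<longleftrightarrow> Hausdorff_space Y \<and>
     (\<exists>V E. finite V \<and> finite E \<and> topspace Y = V \<union> \<Union>E \<and>
        (\<forall>e\<in>E. closedin Y e \<and>
           (\<exists>g. embedding_map (subtopology euclideanreal {0..1}) Y g \<and> g ` {0..1} = e \<and>
                g 0 \<in> V \<and> g 1 \<in> V \<and> (\<forall>t\<in>{0<..<1}. g t \<notin> V))) \<and>
        (\<forall>e\<in>E. \<forall>e'\<in>E. e \<noteq> e' \<longrightarrow> e \<inter> e' \<subseteq> V))"

text \<open>The space T is topspace XT; h embeds the real line; tau is the translation.\<close>
definition lifted_graph :: "'a topology \<Rightarrow> (real \<Rightarrow> 'a) \<Rightarrow> ('a \<Rightarrow> 'a) \<Rightarrow> bool" where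
  "lifted_graph XT h \<tau> \<longleftrightarrow>
     connected_space XT \<and>
     embedding_map euclideanreal XT h \<and>
     homeomorphic_map XT XT \<tau> \<and>
     (\<forall>x. \<tau> (h x) = h (x + 1)) \<and>
     (\<forall>C \<in> connected_components_of (subtopology XT (topspace XT - range h)).
         fin_graph (subtopology XT (XT closure_of C)) \<and>
         (\<exists>!q. q \<in> (XT closure_of C) \<inter> range h)) \<and>
     finite {C \<in> connected_components_of (subtopology XT (topspace XT - range h)).
               (XT closure_of C) \<inter> h ` {0..1} \<noteq> {}}"

text \<open>x + m := tau^m(x), for m an integer.\<close>
definition tshift :: "'a topology \<Rightarrow> ('a \<Rightarrow> 'a) \<Rightarrow> int \<Rightarrow> 'a \<Rightarrow> 'a" where
  "tshift XT \<tau> m x = (if 0 \<le> m then (\<tau> ^^ nat m) x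
                      else (inv_into (topspace XT) \<tau> ^^ nat (- m)) x)"

definition rR :: "'a topology \<Rightarrow> (real \<Rightarrow> 'a) \<Rightarrow> 'a \<Rightarrow> 'a" where
  "rR XT h x = (if x \<in> range h then x
     else (THE q. q \<in> range h \<inter>
        XT closure_of (Collect (connected_component_of (subtopology XT (topspace XT - range h)) x))))"

definition degree_one :: "'a topology \<Rightarrow> ('a \<Rightarrow> 'a) \<Rightarrow> ('a \<Rightarrow> 'a) \<Rightarrow> bool" where
  "degree_one XT \<tau> F \<longleftrightarrow> (\<forall>x\<in>topspace XT. F (tshift XT \<tau> 1 x) = tshift XT \<tau> 1 (F x))"

definition TR :: "'a topology \<Rightarrow> (real \<Rightarrow> 'a) \<Rightarrow> ('a \<Rightarrow> 'a) \<Rightarrow> 'a set" where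
  "TR XT h F = XT closure_of (\<Union>n. (F ^^ n) ` range h)"

definition Xset :: "'a topology \<Rightarrow> (real \<Rightarrow> 'a) \<Rightarrow> ('a \<Rightarrow> 'a) \<Rightarrow> 'a set" where
  "Xset XT h F = XT closure_of (topspace XT - TR XT h F) \<inter>
                 {x \<in> topspace XT. rR XT h x \<in> h ` {0..<1}}"

text \<open>Sun-like map with branches X^i (i \<in> \<Lambda>).  Each branch X^i is given as
  gam i ` {0..1} where gam i is an arc with gam i 0 = min X^i; the order of X^i
  is the one transported by gam i.\<close>
definition sun_like ::
  "'a topology \<Rightarrow> (real \<Rightarrow> 'a) \<Rightarrow> ('a \<Rightarrow> 'a) \<Rightarrow> 'i set \<Rightarrow> ('i \<Rightarrow> real \<Rightarrow> 'a) \<Rightarrow> bool" where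
  "sun_like XT h F \<Lambda> gam \<longleftrightarrow>
     finite \<Lambda> \<and>
     (\<forall>i\<in>\<Lambda>. embedding_map (subtopology euclideanreal {0..1}) XT (gam i)) \<and>
     (\<forall>i\<in>\<Lambda>. \<forall>j\<in>\<Lambda>. i \<noteq> j \<longrightarrow> gam i ` {0..1} \<inter> gam j ` {0..1} = {}) \<and>
     (\<forall>i\<in>\<Lambda>. gam i ` {0..1} \<inter> TR XT h F = {gam i 0}) \<and>
     (topspace XT - TR XT h F) \<inter> {x \<in> topspace XT. rR XT h x \<in> h ` {0..<1}}
        = (\<Union>i\<in>\<Lambda>. gam i ` {0..1} - {gam i 0})"

definition rbr :: "('i \<Rightarrow> real \<Rightarrow> 'a) \<Rightarrow> 'i \<Rightarrow> 'a \<Rightarrow> 'a" where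
  "rbr gam j x = (if x \<in> gam j ` {0..1} then x else gam j 0)"

definition cinterval :: "('i \<Rightarrow> real \<Rightarrow> 'a) \<Rightarrow> 'i \<Rightarrow> 'a set \<Rightarrow> bool" where
  "cinterval gam i I \<longleftrightarrow> (\<exists>a b. 0 \<le> a \<and> a \<le> b \<and> b \<le> 1 \<and> I = gam i ` {a..b})"

definition pos_covers ::
  "'a topology \<Rightarrow> ('a \<Rightarrow> 'a) \<Rightarrow> ('a \<Rightarrow> 'a) \<Rightarrow> ('i \<Rightarrow> real \<Rightarrow> 'a) \<Rightarrow>
   'i \<Rightarrow> 'a set \<Rightarrow> 'i \<Rightarrow> 'a set \<Rightarrow> nat \<Rightarrow> int \<Rightarrow> bool" where
  "pos_covers XT \<tau> F gam i I j J n p \<longleftrightarrow>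
     1 \<le> n \<and>
     (\<exists>c d a b. 0 \<le> c \<and> c \<le> d \<and> d \<le> 1 \<and> I = gam i ` {c..d} \<and>
                0 \<le> a \<and> a \<le> b \<and> b \<le> 1 \<and> J = gam j ` {a..b} \<and>
        (\<exists>s t. c \<le> s \<and> s \<le> t \<and> t \<le> d \<and>
           (\<exists>u\<in>{0..1}. rbr gam j (tshift XT \<tau> (- p) ((F ^^ n) (gam i s))) = gam j u \<and> u \<le> a) \<and>
           (\<exists>v\<in>{0..1}. rbr gam j (tshift XT \<tau> (- p) ((F ^^ n) (gam i t))) = gam j v \<and> b \<le> v)))"

text \<open>The element X^i_j of the partition is Xp i j (i \<in> \<Lambda>, 1 \<le> j \<le> N i);
  elements of the partition are represented by their index pairs (i, j).
  lab i j = \<ell>(X^i_j), sh i j = p(X^i_j).\<close>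
definition pidx :: "'i set \<Rightarrow> ('i \<Rightarrow> nat) \<Rightarrow> ('i \<times> nat) set" where
  "pidx \<Lambda> N = {(i, j). i \<in> \<Lambda> \<and> 1 \<le> j \<and> j \<le> N i}"

definition basic_partition ::
  "'a topology \<Rightarrow> (real \<Rightarrow> 'a) \<Rightarrow> ('a \<Rightarrow> 'a) \<Rightarrow> ('a \<Rightarrow> 'a) \<Rightarrow> 'i set \<Rightarrow> ('i \<Rightarrow> real \<Rightarrow> 'a) \<Rightarrow>
   ('i \<Rightarrow> nat) \<Rightarrow> ('i \<Rightarrow> nat \<Rightarrow> 'a set) \<Rightarrow> ('i \<Rightarrow> nat \<Rightarrow> 'i) \<Rightarrow> ('i \<Rightarrow> nat \<Rightarrow> int) \<Rightarrow> bool" where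
  "basic_partition XT h \<tau> F \<Lambda> gam N Xp lab sh \<longleftrightarrow>
     (\<forall>(i, j) \<in> pidx \<Lambda> N. cinterval gam i (Xp i j)) \<and>
     (\<forall>i\<in>\<Lambda>. \<forall>j j'. 1 \<le> j \<and> j < j' \<and> j' \<le> N i \<longrightarrow>
        (\<forall>s\<in>{0..1}. \<forall>t\<in>{0..1}. gam i s \<in> Xp i j \<and> gam i t \<in> Xp i j' \<longrightarrow> s < t)) \<and>
     (\<forall>(i, j) \<in> pidx \<Lambda> N. lab i j \<in> \<Lambda> \<and>
        F ` Xp i j \<subseteq> tshift XT \<tau> (sh i j) ` (gam (lab i j) ` {0..1}) \<union> XT interior_of TR XT h F \<and>
        (\<exists>a\<in>{0..1}. Xp i j \<subseteq> gam i ` {a..1} \<and> gam i a \<in> Xp i j \<and>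
                    F (gam i a) = tshift XT \<tau> (sh i j) (gam (lab i j) 0))) \<and>
     F ` (Xset XT h F - (\<Union>(i, j) \<in> pidx \<Lambda> N. Xp i j)) \<inter>
        {tshift XT \<tau> m x | m x. x \<in> Xset XT h F} = {}"

definition bra ::
  "'a topology \<Rightarrow> (real \<Rightarrow> 'a) \<Rightarrow> ('a \<Rightarrow> 'a) \<Rightarrow> ('a \<Rightarrow> 'a) \<Rightarrow>
   ('i \<Rightarrow> nat \<Rightarrow> 'a set) \<Rightarrow> ('i \<times> nat) list \<Rightarrow> 'a set" where
  "bra XT h \<tau> F Xp as =
     (F ^^ (length as - 1)) `
        {x \<in> topspace XT. \<forall>i < length as.
            (F ^^ i) x \<in> {tshift XT \<tau> m y | m y. y \<in> Xp (fst (as ! i)) (snd (as ! i))}}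
     \<inter> Xset XT h F"

definition simr ::
  "'a topology \<Rightarrow> (real \<Rightarrow> 'a) \<Rightarrow> ('a \<Rightarrow> 'a) \<Rightarrow> ('a \<Rightarrow> 'a) \<Rightarrow>
   ('i \<Rightarrow> nat \<Rightarrow> 'a set) \<Rightarrow> ('i \<times> nat) list \<Rightarrow> ('i \<times> nat) list \<Rightarrow> bool" where
  "simr XT h \<tau> F Xp as bs \<longleftrightarrow> as \<noteq> [] \<and> bs \<noteq> [] \<and>
     (let n = length as - 1; m = length bs - 1 in
      \<exists>k \<le> min n m.
        (\<forall>i \<le> k. as ! (n - i) = bs ! (m - i)) \<and>
        bra XT h \<tau> F Xp (take (n - k + 1) as) = Xp (fst (as ! (n - k))) (snd (as ! (n - k))) \<and>
        bra XT h \<tau> F Xp (take (m - k + 1) bs) = Xp (fst (bs ! (m - k))) (snd (bs ! (m - k))))"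

definition cls ::
  "'a topology \<Rightarrow> (real \<Rightarrow> 'a) \<Rightarrow> ('a \<Rightarrow> 'a) \<Rightarrow> ('a \<Rightarrow> 'a) \<Rightarrow> 'i set \<Rightarrow> ('i \<Rightarrow> nat) \<Rightarrow>
   ('i \<Rightarrow> nat \<Rightarrow> 'a set) \<Rightarrow> ('i \<times> nat) list \<Rightarrow> ('i \<times> nat) list set" where
  "cls XT h \<tau> F \<Lambda> N Xp as = {bs. set bs \<subseteq> pidx \<Lambda> N \<and> simr XT h \<tau> F Xp as bs}"

definition cg_vertices ::
  "'a topology \<Rightarrow> (real \<Rightarrow> 'a) \<Rightarrow> ('a \<Rightarrow> 'a) \<Rightarrow> ('a \<Rightarrow> 'a) \<Rightarrow> 'i set \<Rightarrow> ('i \<Rightarrow> nat) \<Rightarrow>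
   ('i \<Rightarrow> nat \<Rightarrow> 'a set) \<Rightarrow> ('i \<times> nat) list set set" where
  "cg_vertices XT h \<tau> F \<Lambda> N Xp =
     {cls XT h \<tau> F \<Lambda> N Xp as | as. as \<noteq> [] \<and> set as \<subseteq> pidx \<Lambda> N \<and> bra XT h \<tau> F Xp as \<noteq> {}}"

definition cg_arrow ::
  "'a topology \<Rightarrow> (real \<Rightarrow> 'a) \<Rightarrow> ('a \<Rightarrow> 'a) \<Rightarrow> ('a \<Rightarrow> 'a) \<Rightarrow> 'i set \<Rightarrow> ('i \<Rightarrow> nat) \<Rightarrow>
   ('i \<Rightarrow> nat \<Rightarrow> 'a set) \<Rightarrow> ('i \<times> nat) list set \<Rightarrow> ('i \<times> nat) list set \<Rightarrow> bool" where
  "cg_arrow XT h \<tau> F \<Lambda> N Xp \<alpha> \<beta> \<longleftrightarrow>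
     \<alpha> \<in> cg_vertices XT h \<tau> F \<Lambda> N Xp \<and> \<beta> \<in> cg_vertices XT h \<tau> F \<Lambda> N Xp \<and>
     (\<exists>as a. as \<noteq> [] \<and> set as \<subseteq> pidx \<Lambda> N \<and> a \<in> pidx \<Lambda> N \<and>
        \<alpha> = cls XT h \<tau> F \<Lambda> N Xp as \<and> \<beta> = cls XT h \<tau> F \<Lambda> N Xp (as @ [a]))"

end

theory Submission
  imports Defs
begin

locale LG =
  fixes XT :: "'a topology" and h :: "real \<Rightarrow> 'a" and \<tau> F :: "'a \<Rightarrow> 'a"
    and \<Lambda> :: "'i set" and gam :: "'i \<Rightarrow> real \<Rightarrow> 'a"
    and N :: "'i \<Rightarrow> nat" and Xp :: "'i \<Rightarrow> nat \<Rightarrow> 'a set"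
    and lab :: "'i \<Rightarrow> nat \<Rightarrow> 'i" and sh :: "'i \<Rightarrow> nat \<Rightarrow> int"
  assumes LG: "lifted_graph XT h \<tau>"
    and cont: "continuous_map XT XT F"
    and deg: "degree_one XT \<tau> F"
    and sun: "sun_like XT h F \<Lambda> gam"
    and bp: "basic_partition XT h \<tau> F \<Lambda> gam N Xp lab sh"
begin

abbreviation "TT \<equiv> topspace XT"
abbreviation "ts \<equiv> tshift XT \<tau>"
abbreviation "\<sigma> \<equiv> inv_into (topspace XT) \<tau>"

lemma tau_hom: "homeomorphic_map XT XT \<tau>"
  using LG by (simp add: lifted_graph_def)

lemma tau_inj: "inj_on \<tau> TT" using tau_hom homeomorphic_imp_injective_map by blast
lemma tau_surj: "\<tau> ` TT = TT" using tau_hom homeomorphic_imp_surjective_map by blast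
lemma tau_top: "x \<in> TT \<Longrightarrow> \<tau> x \<in> TT" using tau_surj by blast
lemma sig_tau: "x \<in> TT \<Longrightarrow> \<sigma> (\<tau> x) = x" using tau_inj by (simp add: inv_into_f_f)
lemma tau_sig: "x \<in> TT \<Longrightarrow> \<tau> (\<sigma> x) = x" using tau_surj by (metis f_inv_into_f)
lemma sig_top: "x \<in> TT \<Longrightarrow> \<sigma> x \<in> TT" using tau_surj by (metis inv_into_into)
lemma F_top: "x \<in> TT \<Longrightarrow> F x \<in> TT" using continuous_map_image_subset_topspace[OF cont] by blast

lemma funpow_top: 
  assumes "\<And>x. x \<in> TT \<Longrightarrow> g x \<in> TT" shows "x \<in> TT \<Longrightarrow> (g ^^ n) x \<in> TT"
  by (induction n) (auto simp: assms)

lemma ts_top: "x \<in> TT \<Longrightarrow> ts m x \<in> TT"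
  unfolding tshift_def using funpow_top[of \<tau>, OF tau_top] funpow_top[of \<sigma>, OF sig_top] by auto

lemma ts_0[simp]: "ts 0 x = x" by (simp add: tshift_def)

lemma ts_succ: assumes "x \<in> TT" shows "ts (m+1) x = \<tau> (ts m x)"
proof (cases "0 \<le> m")
  case True
  then have "nat (m+1) = Suc (nat m)" by simp
  then show ?thesis using True by (simp add: tshift_def)
next
  case False
  then have e: "nat (-m) = Suc (nat (-(m+1)))" by simp
  have "ts m x = \<sigma> ((\<sigma> ^^ nat (-(m+1))) x)" using False by (simp add: tshift_def e)
  moreover have "(\<sigma> ^^ nat (-(m+1))) x \<in> TT" using funpow_top[of \<sigma>, OF sig_top] assms by blast
  moreover have "ts (m+1) x = (\<sigma> ^^ nat (-(m+1))) x" using False by (auto simp: tshift_def)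
  ultimately show ?thesis using tau_sig by simp
qed

lemma ts_pred: assumes "x \<in> TT" shows "ts (m-1) x = \<sigma> (ts m x)"
proof -
  have "ts m x = \<tau> (ts (m-1) x)" using ts_succ[OF assms, of "m-1"] by simp
  then show ?thesis using sig_tau ts_top assms by metis
qed

lemma ts_1: "x \<in> TT \<Longrightarrow> ts 1 x = \<tau> x" using ts_succ[of x 0] by simp

lemma ts_add: assumes "x \<in> TT" shows "ts m (ts m' x) = ts (m+m') x"
proof (induction m rule: int_induct[where k=0])
  case base then show ?case by simp
next
  case (step1 i)
  have "ts (i+1) (ts m' x) = \<tau> (ts i (ts m' x))" using ts_succ[OF ts_top[OF assms]] by blast
  moreover have "ts (i+1+m') x = \<tau> (ts (i+m') x)" using ts_succ[OF assms, of "i+m'"] by (simp add: add.commute add.left_commute)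
  ultimately show ?case using step1 by simp
next
  case (step2 i)
  have "ts (i-1) (ts m' x) = \<sigma> (ts i (ts m' x))" using ts_pred[OF ts_top[OF assms]] by blast
  moreover have "ts (i-1+m') x = \<sigma> (ts (i+m') x)" using ts_pred[OF assms, of "i+m'"] by (simp add: algebra_simps)
  ultimately show ?case using step2 by simp
qed

lemma ts_inv: "x \<in> TT \<Longrightarrow> ts (-m) (ts m x) = x" by (simp add: ts_add)
lemma ts_inv': "x \<in> TT \<Longrightarrow> ts m (ts (-m) x) = x" by (simp add: ts_add)

lemma h_top: "h u \<in> TT"
proof -
  have "embedding_map euclideanreal XT h" using LG by (simp add: lifted_graph_def)
  then have "continuous_map euclideanreal XT h"
    by (metis continuous_map_in_subtopology embedding_map_def homeomorphic_imp_continuous_map)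
  then show ?thesis using continuous_map_image_subset_topspace by fastforce
qed

lemma h_inj: "inj h"
proof -
  have "embedding_map euclideanreal XT h" using LG by (simp add: lifted_graph_def)
  then show ?thesis unfolding embedding_map_def using homeomorphic_imp_injective_map by fastforce
qed

lemma tau_h: "\<tau> (h u) = h (u+1)" using LG by (simp add: lifted_graph_def)

lemma sig_h: "\<sigma> (h u) = h (u-1)" using tau_h[of "u-1"] sig_tau[OF h_top, of "u-1"] by simp

lemma ts_h: "ts m (h u) = h (u + of_int m)"
proof (induction m arbitrary: u rule: int_induct[where k=0])
  case base then show ?case by simp
next
  case (step1 i)
  have "ts (i+1) (h u) = \<tau> (ts i (h u))" using ts_succ[OF h_top] by blast
  then show ?case using step1 tau_h by (simp add: algebra_simps)
next
  case (step2 i)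
  have "ts (i-1) (h u) = \<sigma> (ts i (h u))" using ts_pred[OF h_top] by blast
  then show ?case using step2 sig_h by (simp add: algebra_simps)
qed

lemma F_tau: "x \<in> TT \<Longrightarrow> F (\<tau> x) = \<tau> (F x)"
  using deg ts_1 F_top by (simp add: degree_one_def)

lemma F_sig: assumes "x \<in> TT" shows "F (\<sigma> x) = \<sigma> (F x)"
proof -
  have "\<tau> (F (\<sigma> x)) = F x" using F_tau[OF sig_top[OF assms]] tau_sig[OF assms] by simp
  then show ?thesis using sig_tau F_top sig_top assms by metis
qed

lemma F_ts: assumes "x \<in> TT" shows "F (ts m x) = ts m (F x)"
proof (induction m rule: int_induct[where k=0])
  case base then show ?case by simp
next
  case (step1 i) then show ?case using ts_succ[OF assms] ts_succ[OF F_top[OF assms]] F_tau ts_top[OF assms] by simp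
next
  case (step2 i) then show ?case using ts_pred[OF assms] ts_pred[OF F_top[OF assms]] F_sig ts_top[OF assms] by simp
qed

lemma Fn_top: "x \<in> TT \<Longrightarrow> (F ^^ n) x \<in> TT" using funpow_top[of F, OF F_top] .

lemma Fn_ts: assumes "x \<in> TT" shows "(F ^^ n) (ts m x) = ts m ((F ^^ n) x)"
  by (induction n) (auto simp: F_ts Fn_top assms ts_top)

lemma sig_cont: "continuous_map XT XT \<sigma>"
proof -
  obtain g where g: "homeomorphic_maps XT XT \<tau> g" using tau_hom homeomorphic_map_maps by blast
  then have "continuous_map XT XT g" by (simp add: homeomorphic_maps_def)
  moreover have "g y = \<sigma> y" if "y \<in> TT" for y
  proof -
    have "\<tau> (g y) = y" "g y \<in> TT" using g that unfolding homeomorphic_maps_def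
      by (auto simp: continuous_map_def)
    then show ?thesis using sig_tau by metis
  qed
  ultimately show ?thesis using continuous_map_eq by metis
qed

lemma ts_cont: "continuous_map XT XT (ts m)"
proof (induction m rule: int_induct[where k=0])
  case base then show ?case by (simp add: tshift_def)
next
  case (step1 i)
  have "continuous_map XT XT (\<tau> \<circ> ts i)"
    using step1 tau_hom continuous_map_compose homeomorphic_imp_continuous_map by blast
  then show ?case by (rule continuous_map_eq) (simp add: ts_succ)
next
  case (step2 i)
  have "continuous_map XT XT (\<sigma> \<circ> ts i)"
    using step2 sig_cont continuous_map_compose by blast
  then show ?case by (rule continuous_map_eq) (simp add: ts_pred)
qed

lemma ts_hom: "homeomorphic_map XT XT (ts m)"
proof -
  have "homeomorphic_maps XT XT (ts m) (ts (-m))"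
    unfolding homeomorphic_maps_def using ts_cont ts_inv ts_inv' by blast
  then show ?thesis using homeomorphic_map_maps by blast
qed

end

context LG begin

abbreviation "TRs \<equiv> TR XT h F"
abbreviation "Xs \<equiv> Xset XT h F"
abbreviation "ITR \<equiv> XT interior_of TR XT h F"
abbreviation "rr \<equiv> rR XT h"
definition "Br i = gam i ` {0..1}"
definition "Zs S = {ts m y | m y. y \<in> S}"

definition "UU = (\<Union>n. (F ^^ n) ` range h)"

lemma UU_top: "UU \<subseteq> TT" unfolding UU_def using Fn_top h_top by blast

lemma UU_ts: "ts m ` UU = UU"
proof -
  have *: "ts k y \<in> UU" if "y \<in> UU" for y k
  proof -
    from that obtain n u where "y = (F ^^ n) (h u)" unfolding UU_def by blast
    then have "ts k y = (F ^^ n) (h (u + of_int k))" using Fn_ts[OF h_top] ts_h by simp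
    then show ?thesis unfolding UU_def by blast
  qed
  show ?thesis
  proof
    show "ts m ` UU \<subseteq> UU" using * by blast
    show "UU \<subseteq> ts m ` UU"
    proof
      fix y assume "y \<in> UU"
      then have "y = ts m (ts (-m) y)" using ts_inv' UU_top by auto
      then show "y \<in> ts m ` UU" using *[OF \<open>y \<in> UU\<close>, of "-m"] by blast
    qed
  qed
qed

lemma TR_eq: "TRs = XT closure_of UU" unfolding TR_def UU_def by simp

lemma TR_top: "TRs \<subseteq> TT" unfolding TR_eq by (rule closure_of_subset_topspace)

lemma range_h_TR: "range h \<subseteq> TRs"
proof -
  have "range h \<subseteq> (F ^^ 0) ` range h" by simp
  then have "range h \<subseteq> UU" unfolding UU_def by blast
  then show ?thesis unfolding TR_eq using closure_of_subset UU_top by blast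
qed

lemma TR_ts: "ts m ` TRs = TRs"
  unfolding TR_eq using homeomorphic_map_closure_of[OF ts_hom UU_top, of m] UU_ts by simp

lemma ITR_ts: "ts m ` ITR = ITR"
  using homeomorphic_map_interior_of[OF ts_hom TR_top, of m] TR_ts by simp

lemma ITR_tsI: "x \<in> ITR \<Longrightarrow> ts m x \<in> ITR" using ITR_ts by blast

lemma emb: "i \<in> \<Lambda> \<Longrightarrow> embedding_map (subtopology euclideanreal {0..1}) XT (gam i)"
  using sun by (simp add: sun_like_def)

lemma gam_cont: "i \<in> \<Lambda> \<Longrightarrow> continuous_map (subtopology euclideanreal {0..1}) XT (gam i)"
  using emb by (metis continuous_map_in_subtopology embedding_map_def homeomorphic_imp_continuous_map)

lemma gam_inj: "i \<in> \<Lambda> \<Longrightarrow> inj_on (gam i) {0..1}"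
  using emb unfolding embedding_map_def using homeomorphic_imp_injective_map by fastforce

lemma gam_top: "i \<in> \<Lambda> \<Longrightarrow> t \<in> {0..1} \<Longrightarrow> gam i t \<in> TT"
  using continuous_map_image_subset_topspace[OF gam_cont] by fastforce

lemma Br_top: "i \<in> \<Lambda> \<Longrightarrow> Br i \<subseteq> TT" using gam_top Br_def by auto

lemma Br_disj: "i \<in> \<Lambda> \<Longrightarrow> j \<in> \<Lambda> \<Longrightarrow> i \<noteq> j \<Longrightarrow> Br i \<inter> Br j = {}"
  using sun by (simp add: sun_like_def Br_def)

lemma Br_TR: "i \<in> \<Lambda> \<Longrightarrow> Br i \<inter> TRs = {gam i 0}"
  using sun by (simp add: sun_like_def Br_def)

lemma sun_eq: "(TT - TRs) \<inter> {x \<in> TT. rr x \<in> h ` {0..<1}} = (\<Union>i\<in>\<Lambda>. Br i - {gam i 0})"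
  using sun by (simp add: sun_like_def Br_def)

lemma gam_pos: assumes "i \<in> \<Lambda>" "0 < t" "t \<le> 1"
  shows "gam i t \<notin> TRs" "rr (gam i t) \<in> h ` {0..<1}"
proof -
  have "gam i t \<noteq> gam i 0" using gam_inj[OF assms(1)] assms by (auto dest: inj_onD)
  then have "gam i t \<in> Br i - {gam i 0}" using assms unfolding Br_def by auto
  then have "gam i t \<in> (TT - TRs) \<inter> {x \<in> TT. rr x \<in> h ` {0..<1}}" using sun_eq assms(1) by blast
  then show "gam i t \<notin> TRs" "rr (gam i t) \<in> h ` {0..<1}" by auto
qed

lemma rR_ts: assumes x: "x \<in> TT" shows "rr (ts m x) = ts m (rr x)"
proof (cases "x \<in> range h")
  case True
  then obtain u where u: "x = h u" by blast
  then show ?thesis by (simp add: rR_def ts_h)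
next
  case False
  define V where "V = TT - range h"
  define Y where "Y = subtopology XT V"
  let ?g = "ts m"
  have nr: "ts k y \<notin> range h" if "y \<in> TT" "y \<notin> range h" for y k
  proof
    assume "ts k y \<in> range h"
    then obtain v where "ts k y = h v" by blast
    then have "y = ts (-k) (h v)" using ts_inv that by metis
    then show False using that ts_h by simp
  qed
  have gV: "?g ` (TT \<inter> V) = TT \<inter> V"
  proof
    show "?g ` (TT \<inter> V) \<subseteq> TT \<inter> V" using nr ts_top V_def by auto
    show "TT \<inter> V \<subseteq> ?g ` (TT \<inter> V)"
    proof
      fix y assume y: "y \<in> TT \<inter> V"
      have "ts (-m) y \<in> TT" "ts (-m) y \<notin> range h"
        using nr[of y "-m"] y ts_top V_def by auto
      moreover have "y = ?g (ts (-m) y)" using ts_inv' y by auto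
      ultimately show "y \<in> ?g ` (TT \<inter> V)" using V_def by blast
    qed
  qed
  have hY: "homeomorphic_map Y Y ?g" unfolding Y_def
    by (rule homeomorphic_map_subtopologies[OF ts_hom]) (use gV in simp)
  have xY: "x \<in> topspace Y" using x False Y_def V_def by simp
  define C where "C = connected_component_of_set Y x"
  have CC: "C \<in> connected_components_of Y" unfolding C_def
    by (simp add: connected_component_in_connected_components_of xY)
  have C'C: "connected_component_of_set Y (?g x) = ?g ` C"
    unfolding C_def by (rule homeomorphic_map_connected_component_of[OF hY xY])
  have gxY: "?g x \<in> topspace Y" using homeomorphic_imp_surjective_map[OF hY] xY by blast
  have C'CC: "?g ` C \<in> connected_components_of Y"
    unfolding C'C[symmetric] by (simp add: connected_component_in_connected_components_of gxY)
  have Ctop: "C \<subseteq> TT" unfolding C_def Y_def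
    using connected_component_of_subset_topspace by fastforce
  have clo: "XT closure_of (?g ` C) = ?g ` (XT closure_of C)"
    by (rule homeomorphic_map_closure_of[OF ts_hom Ctop])
  have ex1: "\<exists>!q. q \<in> (XT closure_of D) \<inter> range h" if "D \<in> connected_components_of Y" for D
    using LG that unfolding lifted_graph_def Y_def V_def by blast
  obtain q where q: "q \<in> (XT closure_of C) \<inter> range h" using ex1[OF CC] by blast
  have uq: "q' = q" if "q' \<in> range h \<inter> XT closure_of C" for q'
    using ex1[OF CC] q that by blast
  have Ceq: "Collect (connected_component_of (subtopology XT (TT - range h)) x) = C"
    by (simp add: C_def Y_def V_def)
  have "rr x = (THE q'. q' \<in> range h \<inter> XT closure_of C)"
    unfolding rR_def Ceq using False by simp
  also have "\<dots> = q"
  proof (rule the_equality)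
    show "q \<in> range h \<inter> XT closure_of C" using q by blast
  next
    fix q' assume "q' \<in> range h \<inter> XT closure_of C" then show "q' = q" by (rule uq)
  qed
  finally have rx: "rr x = q" .
  have gq: "?g q \<in> range h \<inter> XT closure_of (?g ` C)"
  proof -
    obtain u where "q = h u" using q by blast
    then have "?g q \<in> range h" using ts_h by simp
    moreover have "?g q \<in> ?g ` (XT closure_of C)" using q by blast
    ultimately show ?thesis using clo by simp
  qed
  have uq': "q' = ?g q" if "q' \<in> range h \<inter> XT closure_of (?g ` C)" for q'
    using ex1[OF C'CC] gq that by blast
  have Ceq': "Collect (connected_component_of (subtopology XT (TT - range h)) (?g x)) = ?g ` C"
    using C'C by (simp add: Y_def V_def)
  have "rr (?g x) = (THE q'. q' \<in> range h \<inter> XT closure_of (?g ` C))"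
    unfolding rR_def Ceq' using nr[OF x False] by simp
  also have "\<dots> = ?g q"
  proof (rule the_equality)
    show "?g q \<in> range h \<inter> XT closure_of (?g ` C)" by (rule gq)
  next
    fix q' assume "q' \<in> range h \<inter> XT closure_of (?g ` C)" then show "q' = ?g q" by (rule uq')
  qed
  finally have "rr (?g x) = ?g q" .
  then show ?thesis using rx by simp
qed

end

context LG begin

lemma cl01: "0 \<in> (subtopology euclideanreal {0..1}) closure_of {0<..(1::real)}"
proof -
  have "{0..1::real} \<inter> {0<..1} = {0<..1}" by auto
  then show ?thesis by (simp add: closure_of_subtopology)
qed

lemma gam_cl0: "i \<in> \<Lambda> \<Longrightarrow> gam i 0 \<in> XT closure_of (gam i ` {0<..1})"
  using continuous_map_image_closure_subset[OF gam_cont, of i "{0<..1}"] cl01 by blast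

lemma gam_pos_top: "i \<in> \<Lambda> \<Longrightarrow> gam i ` {0<..1} \<subseteq> TT - TRs"
  using gam_pos(1) gam_top by auto

lemma gam0_cl: "i \<in> \<Lambda> \<Longrightarrow> gam i 0 \<in> XT closure_of (TT - TRs)"
  using gam_cl0 closure_of_mono[OF gam_pos_top] by blast

lemma conn_Ioc: assumes i: "i \<in> \<Lambda>" shows "connectedin XT (gam i ` {0<..1})"
proof -
  have "connected {0<..(1::real)}" by (simp add: is_interval_connected is_interval_oc)
  then have "connectedin (subtopology euclideanreal {0..1}) {0<..(1::real)}"
    by (subst connectedin_subtopology) auto
  then show ?thesis by (rule connectedin_continuous_map_image[OF gam_cont[OF i]])
qed

lemma conn_Icc: assumes i: "i \<in> \<Lambda>" and that: "0 \<le> a" "b \<le> 1" shows "connectedin XT (gam i ` {a..b})"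
proof -
  have "connected {a..(b::real)}" by simp
  then have "connectedin (subtopology euclideanreal {0..1}) {a..b}"
    by (subst connectedin_subtopology) (use that in auto)
  then show ?thesis by (rule connectedin_continuous_map_image[OF gam_cont[OF i]])
qed

lemma gam0_rr: assumes i: "i \<in> \<Lambda>" shows "rr (gam i 0) \<in> h ` {0..<1}"
proof -
  define Y where "Y = subtopology XT (TT - range h)"
  have pos: "gam i ` {0<..1} \<subseteq> TT - range h" using gam_pos_top[OF i] range_h_TR by blast
  have "gam i 1 \<in> gam i ` {0<..1}" by simp
  then have g1: "gam i 1 \<notin> range h" "gam i 1 \<in> TT" using pos by blast+
  have r1: "rr (gam i 1) \<in> h ` {0..<1}" using gam_pos(2)[OF i, of 1] by simp
  show ?thesis
  proof (cases "gam i 0 \<in> range h")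
    case True
    define C1 where "C1 = connected_component_of_set Y (gam i 1)"
    have "connectedin Y (gam i ` {0<..1})" unfolding Y_def using conn_Ioc[OF i] pos
      by (simp add: connectedin_subtopology)
    then have sub: "gam i ` {0<..1} \<subseteq> C1" unfolding C1_def connected_component_of_def
      using \<open>gam i 1 \<in> gam i ` {0<..1}\<close> by blast
    have CC: "C1 \<in> connected_components_of Y" unfolding C1_def
      by (simp add: connected_component_in_connected_components_of Y_def g1)
    have ex1: "\<exists>!q. q \<in> (XT closure_of C1) \<inter> range h"
      using LG CC unfolding lifted_graph_def Y_def by blast
    have g0: "gam i 0 \<in> (XT closure_of C1) \<inter> range h"
      using gam_cl0[OF i] closure_of_mono[OF sub] True by blast
    have "rr (gam i 1) = (THE q'. q' \<in> range h \<inter> XT closure_of C1)"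
      unfolding rR_def using g1 by (simp add: C1_def Y_def)
    also have "\<dots> = gam i 0"
    proof (rule the_equality)
      show "gam i 0 \<in> range h \<inter> XT closure_of C1" using g0 by blast
    next
      fix q' assume "q' \<in> range h \<inter> XT closure_of C1"
      then show "q' = gam i 0" using ex1 g0 by blast
    qed
    finally have "rr (gam i 1) = gam i 0" .
    moreover have "rr (gam i 0) = gam i 0" using True by (simp add: rR_def)
    ultimately show ?thesis using r1 by simp
  next
    case False
    have "gam i ` {0..1} \<subseteq> TT - range h"
    proof
      fix y assume "y \<in> gam i ` {0..1}"
      then obtain t where t: "t \<in> {0..1}" "y = gam i t" by blast
      show "y \<in> TT - range h"
      proof (cases "t = 0")
        case True then show ?thesis using False gam_top[OF i] t by simp
      next
        case False
        then have "t \<in> {0<..1}" using t by auto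
        then have "gam i t \<in> gam i ` {0<..1}" by (rule imageI)
        then have "gam i t \<in> TT - range h" by (rule subsetD[OF pos])
        then show ?thesis using t(2) by simp
      qed
    qed
    then have "connectedin Y (gam i ` {0..1})" unfolding Y_def using conn_Icc[OF i, of 0 1]
      by (simp add: connectedin_subtopology)
    moreover have "gam i 0 \<in> gam i ` {0..1}" "gam i 1 \<in> gam i ` {0..1}" by auto
    ultimately have "connected_component_of Y (gam i 0) (gam i 1)"
      unfolding connected_component_of_def by blast
    then have "connected_component_of Y (gam i 0) = connected_component_of Y (gam i 1)"
      using connected_component_of_equiv by metis
    then have "rr (gam i 0) = rr (gam i 1)" unfolding rR_def using False g1 by (simp add: Y_def)
    then show ?thesis using r1 by simp
  qed
qed

lemma Br_X: assumes i: "i \<in> \<Lambda>" shows "Br i \<subseteq> Xs"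
proof
  fix x assume "x \<in> Br i"
  then obtain t where t: "t \<in> {0..1}" "x = gam i t" unfolding Br_def by blast
  show "x \<in> Xs"
  proof (cases "t = 0")
    case True
    then show ?thesis using t gam0_cl[OF i] gam0_rr[OF i] gam_top[OF i] unfolding Xset_def by auto
  next
    case False
    then have "0 < t" "t \<le> 1" using t by auto
    then have "x \<in> TT - TRs" "rr x \<in> h ` {0..<1}" using gam_pos[OF i] gam_top[OF i] t by auto
    then show ?thesis unfolding Xset_def using closure_of_subset[of "TT - TRs" XT] by auto
  qed
qed

lemma Xs_top: "Xs \<subseteq> TT" unfolding Xset_def by auto

lemma X_shift: assumes x: "x \<in> Xs" and y: "ts d x \<in> Xs" shows "d = 0"
proof -
  have xT: "x \<in> TT" using x Xs_top by blast
  obtain u where u: "rr x = h u" "u \<in> {0..<1}" using x unfolding Xset_def by blast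
  obtain v where v: "rr (ts d x) = h v" "v \<in> {0..<1}" using y unfolding Xset_def by blast
  have "rr (ts d x) = h (u + of_int d)" using rR_ts[OF xT] u ts_h by simp
  then have "v = u + of_int d" using v h_inj by (simp add: inj_eq)
  then have "-1 < real_of_int d" "real_of_int d < 1" using u v by auto
  then show ?thesis by linarith
qed

lemma Br_ITR: assumes i: "i \<in> \<Lambda>" shows "Br i \<inter> ITR = {}"
proof -
  have "gam i t \<notin> ITR" if "t \<in> {0..1}" for t
  proof (cases "t = 0")
    case True
    then show ?thesis using gam0_cl[OF i] closure_of_complement by (metis Diff_iff)
  next
    case False
    then show ?thesis using gam_pos(1)[OF i, of t] that interior_of_subset by fastforce
  qed
  then show ?thesis unfolding Br_def by blast
qed

lemma ZX: assumes i: "i \<in> \<Lambda>" and A: "A \<subseteq> Br i" shows "Zs A \<inter> Xs = A"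
proof
  show "Zs A \<inter> Xs \<subseteq> A"
  proof
    fix x assume x: "x \<in> Zs A \<inter> Xs"
    then obtain m y where my: "x = ts m y" "y \<in> A" unfolding Zs_def by blast
    then have "y \<in> Xs" using A Br_X[OF i] by blast
    then have "m = 0" using X_shift x my by blast
    then show "x \<in> A" using my by simp
  qed
  show "A \<subseteq> Zs A \<inter> Xs"
  proof
    fix y assume "y \<in> A"
    moreover have "y = ts 0 y" by simp
    ultimately show "y \<in> Zs A \<inter> Xs" unfolding Zs_def using A Br_X[OF i] by blast
  qed
qed

end

context LG begin

abbreviation "XP p \<equiv> Xp (fst p) (snd p)"
abbreviation "br \<equiv> bra XT h \<tau> F Xp"
abbreviation "PI \<equiv> pidx \<Lambda> N"
definition "valid w \<longleftrightarrow> w \<noteq> [] \<and> set w \<subseteq> PI"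

lemma pidx_L: "p \<in> PI \<Longrightarrow> fst p \<in> \<Lambda>" by (auto simp: pidx_def)

lemma bpA: "\<forall>(i, j) \<in> PI. cinterval gam i (Xp i j)"
  using bp unfolding basic_partition_def by (rule conjunct1)
lemma bpB: "\<forall>i\<in>\<Lambda>. \<forall>j j'. 1 \<le> j \<and> j < j' \<and> j' \<le> N i \<longrightarrow>
        (\<forall>s\<in>{0..1}. \<forall>t\<in>{0..1}. gam i s \<in> Xp i j \<and> gam i t \<in> Xp i j' \<longrightarrow> s < t)"
  using bp unfolding basic_partition_def by (rule conjunct1[OF conjunct2])
lemma bpC: "\<forall>(i, j) \<in> PI. lab i j \<in> \<Lambda> \<and>
        F ` Xp i j \<subseteq> tshift XT \<tau> (sh i j) ` (gam (lab i j) ` {0..1}) \<union> XT interior_of TR XT h F \<and>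
        (\<exists>a\<in>{0..1}. Xp i j \<subseteq> gam i ` {a..1} \<and> gam i a \<in> Xp i j \<and>
                    F (gam i a) = tshift XT \<tau> (sh i j) (gam (lab i j) 0))"
  using bp unfolding basic_partition_def by (rule conjunct1[OF conjunct2[OF conjunct2]])

lemma bp_cint: assumes "p \<in> PI" shows "cinterval gam (fst p) (XP p)"
proof -
  obtain i j where "p = (i,j)" by (cases p)
  then show ?thesis using bpA assms by auto
qed

lemma bp_order: "i \<in> \<Lambda> \<Longrightarrow> 1 \<le> j \<Longrightarrow> j < j' \<Longrightarrow> j' \<le> N i \<Longrightarrow> s \<in> {0..1} \<Longrightarrow> t \<in> {0..1}
   \<Longrightarrow> gam i s \<in> Xp i j \<Longrightarrow> gam i t \<in> Xp i j' \<Longrightarrow> s < t"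
  using bpB by meson

lemma bp_lab: assumes "(i,j) \<in> PI"
  shows "lab i j \<in> \<Lambda>" "F ` Xp i j \<subseteq> ts (sh i j) ` Br (lab i j) \<union> ITR"
    "\<exists>a\<in>{0..1}. Xp i j \<subseteq> gam i ` {a..1} \<and> gam i a \<in> Xp i j \<and> F (gam i a) = ts (sh i j) (gam (lab i j) 0)"
proof -
  have "lab i j \<in> \<Lambda> \<and>
        F ` Xp i j \<subseteq> tshift XT \<tau> (sh i j) ` (gam (lab i j) ` {0..1}) \<union> XT interior_of TR XT h F \<and>
        (\<exists>a\<in>{0..1}. Xp i j \<subseteq> gam i ` {a..1} \<and> gam i a \<in> Xp i j \<and>
                    F (gam i a) = tshift XT \<tau> (sh i j) (gam (lab i j) 0))"
    using bpC assms by blast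
  then show "lab i j \<in> \<Lambda>" "F ` Xp i j \<subseteq> ts (sh i j) ` Br (lab i j) \<union> ITR"
    "\<exists>a\<in>{0..1}. Xp i j \<subseteq> gam i ` {a..1} \<and> gam i a \<in> Xp i j \<and> F (gam i a) = ts (sh i j) (gam (lab i j) 0)"
    unfolding Br_def by blast+
qed

lemma Xp_Br: "p \<in> PI \<Longrightarrow> XP p \<subseteq> Br (fst p)"
  using bp_cint unfolding cinterval_def Br_def by fastforce

lemma Xp_X: "p \<in> PI \<Longrightarrow> XP p \<subseteq> Xs" using Xp_Br Br_X pidx_L by blast

lemma Xp_top: "p \<in> PI \<Longrightarrow> XP p \<subseteq> TT" using Xp_X Xs_top by blast

lemma Xp_int: assumes p: "(i,j) \<in> PI"
  shows "\<exists>a b. 0 \<le> a \<and> a \<le> b \<and> b \<le> 1 \<and> Xp i j = gam i ` {a..b} \<and> F (gam i a) = ts (sh i j) (gam (lab i j) 0)"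
proof -
  have i: "i \<in> \<Lambda>" using p by (auto simp: pidx_def)
  obtain a0 b0 where ab: "0 \<le> a0" "a0 \<le> b0" "b0 \<le> 1" "Xp i j = gam i ` {a0..b0}"
    using bp_cint[OF p] unfolding cinterval_def by auto
  obtain a where a: "a \<in> {0..1}" "Xp i j \<subseteq> gam i ` {a..1}" "gam i a \<in> Xp i j" "F (gam i a) = ts (sh i j) (gam (lab i j) 0)"
    using bp_lab(3)[OF p] by blast
  have "gam i a0 \<in> gam i ` {a..1}" using ab a(2) by auto
  then obtain t where t: "t \<in> {a..1}" "gam i a0 = gam i t" by blast
  then have "a0 = t" using gam_inj[OF i] ab a(1) by (auto dest: inj_onD)
  then have 1: "a \<le> a0" using t by simp
  have "gam i a \<in> gam i ` {a0..b0}" using ab a(3) by simp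
  then obtain t' where t': "t' \<in> {a0..b0}" "gam i a = gam i t'" by blast
  then have "a = t'" using gam_inj[OF i] ab a(1) by (auto dest: inj_onD)
  then have "a0 \<le> a" using t' by simp
  with 1 have "a = a0" by simp
  then show ?thesis using ab a by blast
qed

definition "lo i j = (SOME a. \<exists>b. 0 \<le> a \<and> a \<le> b \<and> b \<le> 1 \<and> Xp i j = gam i ` {a..b} \<and> F (gam i a) = ts (sh i j) (gam (lab i j) 0))"
definition "hi i j = (SOME b. 0 \<le> lo i j \<and> lo i j \<le> b \<and> b \<le> 1 \<and> Xp i j = gam i ` {lo i j..b} \<and> F (gam i (lo i j)) = ts (sh i j) (gam (lab i j) 0))"

lemma lohi: assumes p: "(i,j) \<in> PI"
  shows "0 \<le> lo i j" "lo i j \<le> hi i j" "hi i j \<le> 1" "Xp i j = gam i ` {lo i j..hi i j}"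
    "F (gam i (lo i j)) = ts (sh i j) (gam (lab i j) 0)"
proof -
  have "\<exists>b. 0 \<le> lo i j \<and> lo i j \<le> b \<and> b \<le> 1 \<and> Xp i j = gam i ` {lo i j..b} \<and> F (gam i (lo i j)) = ts (sh i j) (gam (lab i j) 0)"
    unfolding lo_def by (rule someI_ex) (use Xp_int[OF p] in blast)
  then have "0 \<le> lo i j \<and> lo i j \<le> hi i j \<and> hi i j \<le> 1 \<and> Xp i j = gam i ` {lo i j..hi i j} \<and> F (gam i (lo i j)) = ts (sh i j) (gam (lab i j) 0)"
    unfolding hi_def by (rule someI_ex)
  then show "0 \<le> lo i j" "lo i j \<le> hi i j" "hi i j \<le> 1" "Xp i j = gam i ` {lo i j..hi i j}"
    "F (gam i (lo i j)) = ts (sh i j) (gam (lab i j) 0)" by auto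
qed

lemma Zs_ts: assumes "y \<in> Zs A" "A \<subseteq> TT" shows "ts k y \<in> Zs A"
proof -
  obtain m a where "y = ts m a" "a \<in> A" using assms unfolding Zs_def by blast
  then have "ts k y = ts (k+m) a" using ts_add assms(2) by blast
  then show ?thesis using \<open>a \<in> A\<close> unfolding Zs_def by blast
qed

lemma bra_unf: "br as = (F ^^ (length as - 1)) ` {x \<in> TT. \<forall>i < length as. (F ^^ i) x \<in> Zs (XP (as ! i))} \<inter> Xs"
  unfolding bra_def Zs_def by simp

lemma funpow_Suc_apply: "(F ^^ Suc n) x = F ((F ^^ n) x)" by simp

lemma R1: assumes w: "valid w" and B: "B \<in> PI"
  shows "br (w @ [B]) = Zs (F ` br w) \<inter> Zs (XP B) \<inter> Xs"
proof -
  define n where "n = length w"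
  have n1: "n \<ge> 1" using w unfolding valid_def n_def by (cases w) auto
  have wset: "w ! i \<in> PI" if "i < n" for i using w that unfolding valid_def n_def by auto
  have nth1: "(w @ [B]) ! i = w ! i" if "i < n" for i using that by (simp add: nth_append n_def)
  have nth2: "(w @ [B]) ! n = B" by (simp add: n_def)
  have len: "length (w @ [B]) - 1 = n" "length w - 1 = n - 1" "length (w @ [B]) = Suc n" by (auto simp: n_def)
  have len0: "length w = n" by (simp add: n_def)
  have Fn: "(F ^^ n) x = F ((F ^^ (n-1)) x)" for x using n1 funpow_Suc_apply[of "n-1" x] by simp
  show ?thesis
  proof
    show "br (w @ [B]) \<subseteq> Zs (F ` br w) \<inter> Zs (XP B) \<inter> Xs"
    proof
      fix y assume y: "y \<in> br (w @ [B])"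
      then obtain x where x: "x \<in> TT" "\<forall>i < Suc n. (F ^^ i) x \<in> Zs (XP ((w@[B]) ! i))" "y = (F ^^ n) x" "y \<in> Xs"
        unfolding bra_unf len(1) unfolding len(3) by blast
      have xi: "(F ^^ i) x \<in> Zs (XP (w ! i))" if "i < n" for i using x(2) nth1 that by (metis less_SucI)
      have "(F ^^ (n-1)) x \<in> Zs (XP (w ! (n-1)))" using xi n1 by simp
      then obtain m a where ma: "(F ^^ (n-1)) x = ts m a" "a \<in> XP (w ! (n-1))" unfolding Zs_def by blast
      have wl: "w ! (n-1) \<in> PI" using wset n1 by simp
      have aT: "a \<in> TT" "a \<in> Xs" using ma(2) Xp_top[OF wl] Xp_X[OF wl] by auto
      define x' where "x' = ts (-m) x"
      have x'T: "x' \<in> TT" using ts_top x(1) x'_def by simp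
      have "(F ^^ i) x' \<in> Zs (XP (w ! i))" if "i < n" for i
        unfolding x'_def Fn_ts[OF x(1)] using Zs_ts[OF xi[OF that] Xp_top[OF wset[OF that]]] .
      moreover have "(F ^^ (n-1)) x' = a" unfolding x'_def Fn_ts[OF x(1)] ma(1) using ts_inv aT by simp
      ultimately have "a \<in> br w" unfolding bra_unf len0 using x'T aT by blast
      moreover have "y = ts m (F a)" using x(3) Fn ma(1) F_ts aT by simp
      ultimately have "y \<in> Zs (F ` br w)" unfolding Zs_def by blast
      moreover have "y \<in> Zs (XP B)" using x(2) x(3) nth2 by auto
      ultimately show "y \<in> Zs (F ` br w) \<inter> Zs (XP B) \<inter> Xs" using x(4) by blast
    qed
    show "Zs (F ` br w) \<inter> Zs (XP B) \<inter> Xs \<subseteq> br (w @ [B])"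
    proof
      fix y assume y: "y \<in> Zs (F ` br w) \<inter> Zs (XP B) \<inter> Xs"
      then obtain m z where mz: "y = ts m (F z)" "z \<in> br w" unfolding Zs_def by blast
      then obtain x where x: "x \<in> TT" "\<forall>i < n. (F ^^ i) x \<in> Zs (XP (w ! i))" "z = (F ^^ (n-1)) x"
        unfolding bra_unf len0 by blast
      define x' where "x' = ts m x"
      have x'T: "x' \<in> TT" using ts_top x(1) x'_def by simp
      have a: "(F ^^ i) x' \<in> Zs (XP ((w@[B]) ! i))" if "i < Suc n" for i
      proof (cases "i < n")
        case True
        then show ?thesis unfolding x'_def Fn_ts[OF x(1)] nth1[OF True]
          using Zs_ts[OF x(2)[rule_format, OF True] Xp_top[OF wset[OF True]]] by simp
      next
        case False
        then have "i = n" using that by simp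
        moreover have "(F ^^ n) x' = y" unfolding x'_def Fn_ts[OF x(1)] Fn mz(1) x(3) by simp
        ultimately show ?thesis using y nth2 by simp
      qed
      have "y = (F ^^ n) x'" unfolding x'_def Fn_ts[OF x(1)] Fn mz(1) x(3) by simp
      then show "y \<in> br (w @ [B])" unfolding bra_unf len(1) unfolding len(3) using x'T a y by blast
    qed
  qed
qed

lemma R0: assumes B: "B \<in> PI" shows "br [B] = XP B"
proof -
  have "br [B] = TT \<inter> Zs (XP B) \<inter> Xs" unfolding bra_unf by auto
  also have "\<dots> = Zs (XP B) \<inter> Xs" using Xs_top by blast
  also have "\<dots> = XP B" using ZX[OF pidx_L[OF B] Xp_Br[OF B]] .
  finally show ?thesis .
qed

lemma bra_sub: assumes w: "valid w" shows "br w \<subseteq> XP (last w)"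
proof -
  have n1: "length w \<ge> 1" using w unfolding valid_def by (cases w) auto
  have lw: "last w = w ! (length w - 1)" using w unfolding valid_def by (simp add: last_conv_nth)
  have lp: "last w \<in> PI" using w unfolding valid_def by auto
  have "br w \<subseteq> Zs (XP (last w)) \<inter> Xs"
  proof
    fix y assume "y \<in> br w"
    then obtain x where "\<forall>i < length w. (F ^^ i) x \<in> Zs (XP (w ! i))" "y = (F ^^ (length w - 1)) x" "y \<in> Xs"
      unfolding bra_unf by blast
    then show "y \<in> Zs (XP (last w)) \<inter> Xs" using n1 lw by auto
  qed
  also have "\<dots> = XP (last w)" using ZX[OF pidx_L[OF lp] Xp_Br[OF lp]] .
  finally show ?thesis .
qed

lemma bra_cong: assumes w1: "valid w1" and w2: "valid w2" and e: "br w1 = br w2" and u: "set u \<subseteq> PI"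
  shows "br (w1 @ u) = br (w2 @ u)"
  using u
proof (induction u rule: rev_induct)
  case Nil then show ?case using e by simp
next
  case (snoc B u)
  have v1: "valid (w1 @ u)" "valid (w2 @ u)" using w1 w2 snoc.prems unfolding valid_def by auto
  have B: "B \<in> PI" using snoc.prems by simp
  have "br (w1 @ u @ [B]) = br ((w1 @ u) @ [B])" by simp
  also have "\<dots> = Zs (F ` br (w1 @ u)) \<inter> Zs (XP B) \<inter> Xs" by (rule R1[OF v1(1) B])
  also have "\<dots> = Zs (F ` br (w2 @ u)) \<inter> Zs (XP B) \<inter> Xs" using snoc by simp
  also have "\<dots> = br ((w2 @ u) @ [B])" by (rule R1[OF v1(2) B, symmetric])
  finally show ?case by simp
qed

lemma restart: assumes w: "valid w" and j: "j < length w" and e: "br (take (Suc j) w) = XP (w ! j)"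
  shows "br w = br (drop j w)"
proof -
  have wj: "w ! j \<in> PI" using w j unfolding valid_def by auto
  have v1: "valid (take (Suc j) w)" using w j unfolding valid_def by (auto dest: in_set_takeD)
  have v2: "valid [w ! j]" using wj unfolding valid_def by simp
  have e2: "br (take (Suc j) w) = br [w ! j]" using e R0[OF wj] by simp
  have u: "set (drop (Suc j) w) \<subseteq> PI" using w unfolding valid_def by (auto dest: in_set_dropD)
  have "br w = br (take (Suc j) w @ drop (Suc j) w)" by simp
  also have "\<dots> = br ([w ! j] @ drop (Suc j) w)" by (rule bra_cong[OF v1 v2 e2 u])
  also have "[w ! j] @ drop (Suc j) w = drop j w" using j by (simp add: Cons_nth_drop_Suc)
  finally show ?thesis .
qed

end

context LG begin

lemma ITR_top: "ITR \<subseteq> TT" using interior_of_subset[of XT TRs] TR_top by (rule order_trans)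

lemma IS: assumes l: "l \<in> \<Lambda>" and C: "compactin XT C" and conn: "connectedin XT C"
  and sub: "C \<subseteq> Br l \<union> ITR" and g0: "gam l 0 \<in> C"
  shows "\<exists>s\<in>{0..1}. C \<inter> Br l = gam l ` {0..s}"
proof -
  define K where "K = {t\<in>{0..1}. gam l t \<in> C}"
  have CK: "C \<inter> Br l = gam l ` K" unfolding K_def Br_def by auto
  have CT: "C \<subseteq> TT" using C compactin_subset_topspace by blast
  have dis: "Br l \<inter> ITR = {}" by (rule Br_ITR[OF l])
  have "C \<inter> Br l = C \<inter> (TT - ITR)" using sub dis CT by blast
  moreover have "closedin XT (TT - ITR)" unfolding closedin_def using ITR_top
    by (simp add: Diff_Diff_Int inf.absorb2)
  ultimately have cK1: "compactin XT (gam l ` K)" using compact_Int_closedin[OF C] CK by metis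
  have hom: "homeomorphic_map (subtopology euclideanreal {0..1}) (subtopology XT (Br l)) (gam l)"
    using emb[OF l] unfolding embedding_map_def Br_def by simp
  have K01: "K \<subseteq> {0..1}" unfolding K_def by blast
  have "compactin (subtopology XT (Br l)) (gam l ` K)" using cK1 K01
    by (simp add: compactin_subtopology Br_def image_mono)
  then have "compactin (subtopology euclideanreal {0..1}) K"
    using homeomorphic_map_compactness[OF hom] K01 by simp
  then have cK: "compact K" by (simp add: compactin_subtopology)
  have K0: "0 \<in> K" unfolding K_def using g0 by simp
  obtain s where s: "s \<in> K" "\<And>t. t \<in> K \<Longrightarrow> t \<le> s"
    using compact_attains_sup[OF cK] K0 by blast
  have s01: "s \<in> {0..1}" using s K01 by blast
  have gnotTR: "gam l u \<notin> TRs" if "0 < u" "u \<le> 1" for u using gam_pos(1)[OF l that(1) that(2)] .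
  have inj: "inj_on (gam l) {0..1}" by (rule gam_inj[OF l])
  have "{0..s} \<subseteq> K"
  proof
    fix t assume t: "t \<in> {0..s}"
    show "t \<in> K"
    proof (rule ccontr)
      assume tK: "t \<notin> K"
      then have t0: "0 < t" "t < s" using t K0 s(1) by (auto simp: less_le)
      define P1 where "P1 = {0..1} \<inter> {..<t}"
      define P2 where "P2 = {0..1} \<inter> {t<..}"
      have "openin (subtopology euclideanreal {0..1}) P1" unfolding P1_def openin_open
        by (intro exI[of _ "{..<t}"]) auto
      then have "openin (subtopology XT (Br l)) (gam l ` P1)"
        using homeomorphic_map_openness[OF hom] P1_def by auto
      then obtain U1 where U1: "openin XT U1" "gam l ` P1 = U1 \<inter> Br l"
        unfolding openin_subtopology by blast
      have "openin (subtopology euclideanreal {0..1}) P2" unfolding P2_def openin_open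
        by (intro exI[of _ "{t<..}"]) auto
      then have "openin (subtopology XT (Br l)) (gam l ` P2)"
        using homeomorphic_map_openness[OF hom] P2_def by auto
      then obtain U2 where U2: "openin XT U2" "gam l ` P2 = U2 \<inter> Br l"
        unfolding openin_subtopology by blast
      define E1 where "E1 = ITR \<union> U1"
      define E2 where "E2 = U2 - TRs"
      have oE1: "openin XT E1" unfolding E1_def using openin_Un[OF openin_interior_of U1(1)] .
      have cTR: "closedin XT TRs" unfolding TR_def by simp
      have oE2: "openin XT E2" unfolding E2_def using openin_diff[OF U2(1) cTR] .
      have cov: "C \<subseteq> E1 \<union> E2"
      proof
        fix c assume c: "c \<in> C"
        show "c \<in> E1 \<union> E2"
        proof (cases "c \<in> ITR")
          case True then show ?thesis unfolding E1_def by blast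
        next
          case False
          then have "c \<in> Br l" using sub c by blast
          then obtain u where u: "u \<in> {0..1}" "c = gam l u" unfolding Br_def by blast
          then have uK: "u \<in> K" using c K_def by blast
          then have "u \<noteq> t" using tK by blast
          then consider "u < t" | "t < u" by linarith
          then show ?thesis
          proof cases
            case 1
            then have "u \<in> P1" using u P1_def by simp
            then have "c \<in> U1" using U1(2) u(2) by blast
            then show ?thesis unfolding E1_def by blast
          next
            case 2
            then have "u \<in> P2" using u P2_def by simp
            then have "c \<in> U2" using U2(2) u(2) by blast
            moreover have "c \<notin> TRs" using gnotTR[of u] 2 t0 u by simp
            ultimately show ?thesis unfolding E2_def by blast
          qed
        qed
      qed
      have disj: "E1 \<inter> E2 \<inter> C = {}"
      proof (rule ccontr)
        assume "E1 \<inter> E2 \<inter> C \<noteq> {}"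
        then obtain c where c: "c \<in> E1" "c \<in> E2" "c \<in> C" by blast
        have cU2: "c \<in> U2" "c \<notin> TRs" using c(2) E2_def by auto
        then have "c \<notin> ITR" using interior_of_subset[of XT TRs] by blast
        then have cU1: "c \<in> U1" using c(1) E1_def by blast
        have cB: "c \<in> Br l" using sub c(3) \<open>c \<notin> ITR\<close> by blast
        have "c \<in> U1 \<inter> Br l" "c \<in> U2 \<inter> Br l" using cB cU1 cU2 by blast+
        then have "c \<in> gam l ` P1" "c \<in> gam l ` P2" unfolding U1(2) U2(2) by blast+
        then obtain u1 u2 where "u1 \<in> P1" "u2 \<in> P2" "gam l u1 = gam l u2" by (metis imageE)
        moreover have "u1 \<in> {0..1}" "u2 \<in> {0..1}" using calculation P1_def P2_def by auto
        ultimately have "u1 = u2" using inj by (meson inj_onD)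
        then show False using \<open>u1 \<in> P1\<close> \<open>u2 \<in> P2\<close> P1_def P2_def by simp
      qed
      have ne1: "E1 \<inter> C \<noteq> {}"
      proof -
        have "0 \<in> P1" using t0 P1_def by simp
        then have "gam l 0 \<in> U1" using U1(2) by (metis IntE imageI)
        then show ?thesis using g0 E1_def by blast
      qed
      have ne2: "E2 \<inter> C \<noteq> {}"
      proof -
        have "s \<in> P2" using t0 s01 P2_def by simp
        then have "gam l s \<in> U2" using U2(2) by (metis IntE imageI)
        moreover have "gam l s \<notin> TRs" using gnotTR[of s] t0 s01 by simp
        moreover have "gam l s \<in> C" using s(1) K_def by blast
        ultimately show ?thesis using E2_def by blast
      qed
      have "\<exists>E1 E2. openin XT E1 \<and> openin XT E2 \<and>
             C \<subseteq> E1 \<union> E2 \<and> E1 \<inter> E2 \<inter> C = {} \<and> E1 \<inter> C \<noteq> {} \<and> E2 \<inter> C \<noteq> {}"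
        using oE1 oE2 cov disj ne1 ne2 by (intro exI[of _ E1] exI[of _ E2]) simp
      then show False using conn unfolding connectedin by simp
    qed
  qed
  moreover have "K \<subseteq> {0..s}" using s(2) K01 by auto
  ultimately have "K = {0..s}" by blast
  then have "C \<inter> Br l = gam l ` {0..s}" using CK by simp
  then show ?thesis using s01 by (intro bexI[of _ s])
qed

end

context LG begin

lemma last_PI: "valid w \<Longrightarrow> last w \<in> PI" unfolding valid_def using last_in_set by blast

lemma R1a: assumes w: "valid w" and lw: "last w = (i,j)" and B: "B \<in> PI" and y: "y \<in> br (w @ [B])"
  shows "fst B = lab i j \<and> y \<in> ts (-(sh i j)) ` F ` br w"
proof -
  have ij: "(i,j) \<in> PI" using last_PI[OF w] lw by simp
  have l: "lab i j \<in> \<Lambda>" using bp_lab(1)[OF ij] .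
  have fB: "fst B \<in> \<Lambda>" using pidx_L[OF B] .
  have yy: "y \<in> Zs (F ` br w)" "y \<in> Zs (XP B)" "y \<in> Xs" using y R1[OF w B] by auto
  obtain m z where mz: "y = ts m (F z)" "z \<in> br w" using yy(1) unfolding Zs_def by blast
  have zX: "z \<in> Xp i j" using bra_sub[OF w] lw mz(2) by auto
  have zT: "z \<in> TT" using zX Xp_top[OF ij] by auto
  have yB: "y \<in> XP B" using yy(2,3) ZX[OF fB Xp_Br[OF B]] by blast
  then have yBr: "y \<in> Br (fst B)" using Xp_Br[OF B] by blast
  have Fz: "F z \<in> ts (sh i j) ` Br (lab i j) \<union> ITR" using bp_lab(2)[OF ij] zX by blast
  have main: "fst B = lab i j \<and> y = ts (-(sh i j)) (F z)"
  proof (cases "F z \<in> ITR")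
    case True
    then have "y \<in> ITR" using mz(1) ITR_tsI by simp
    then show ?thesis using yBr Br_ITR[OF fB] by blast
  next
    case False
    then obtain g where g: "g \<in> Br (lab i j)" "F z = ts (sh i j) g" using Fz by blast
    have gT: "g \<in> TT" "g \<in> Xs" using g(1) Br_top[OF l] Br_X[OF l] by auto
    have ye: "y = ts (m + sh i j) g" using mz(1) g(2) ts_add gT by simp
    then have "m + sh i j = 0" using X_shift[OF gT(2)] yy(3) by simp
    then have yg: "y = g" using ye by simp
    have "fst B = lab i j"
    proof (rule ccontr)
      assume "fst B \<noteq> lab i j"
      then have "Br (fst B) \<inter> Br (lab i j) = {}" using Br_disj fB l by blast
      then show False using yBr g(1) yg by blast
    qed
    moreover have "ts (-(sh i j)) (F z) = g" using g(2) ts_inv gT by simp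
    ultimately show ?thesis using yg by simp
  qed
  then show ?thesis using mz(2) by blast
qed

lemma R1b: assumes w: "valid w" and B: "B \<in> PI" and z: "z \<in> br w" and yB: "ts k (F z) \<in> XP B"
  shows "ts k (F z) \<in> br (w @ [B])"
proof -
  have "ts k (F z) \<in> Zs (F ` br w)" unfolding Zs_def using z by blast
  moreover have "ts k (F z) \<in> Zs (XP B)" unfolding Zs_def using yB by (metis (mono_tags, lifting) mem_Collect_eq ts_0)
  moreover have "ts k (F z) \<in> Xs" using yB Xp_X[OF B] by blast
  ultimately show ?thesis using R1[OF w B] by simp
qed

lemma brC: assumes w: "valid w" and lw: "last w = (i,j)" and B: "B \<in> PI" and fB: "fst B = lab i j"
  shows "br (w @ [B]) = ts (-(sh i j)) ` F ` br w \<inter> XP B"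
proof
  have vB: "valid (w @ [B])" using w B unfolding valid_def by auto
  show "br (w @ [B]) \<subseteq> ts (-(sh i j)) ` F ` br w \<inter> XP B"
  proof
    fix y assume y: "y \<in> br (w @ [B])"
    then have "y \<in> ts (-(sh i j)) ` F ` br w" using R1a[OF w lw B] by blast
    moreover have "y \<in> XP B" using bra_sub[OF vB] y by auto
    ultimately show "y \<in> ts (-(sh i j)) ` F ` br w \<inter> XP B" by blast
  qed
  show "ts (-(sh i j)) ` F ` br w \<inter> XP B \<subseteq> br (w @ [B])"
  proof
    fix y assume y: "y \<in> ts (-(sh i j)) ` F ` br w \<inter> XP B"
    then obtain z where z: "z \<in> br w" "y = ts (-(sh i j)) (F z)" by blast
    then show "y \<in> br (w @ [B])" using R1b[OF w B z(1)] y by simp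
  qed
qed

lemma CS: assumes w: "valid w" and lw: "last w = (i,j)" and bw: "br w = gam i ` {lo i j..d}"
  and d: "lo i j \<le> d" "d \<le> hi i j"
  shows "\<exists>s\<in>{0..1}. (ts (-(sh i j)) ` F ` br w) \<inter> Br (lab i j) = gam (lab i j) ` {0..s}"
proof -
  have ij: "(i,j) \<in> PI" using last_PI[OF w] lw by simp
  have i: "i \<in> \<Lambda>" using pidx_L[OF ij] by simp
  have l: "lab i j \<in> \<Lambda>" using bp_lab(1)[OF ij] .
  note lh = lohi[OF ij]
  define p where "p = sh i j"
  define C where "C = ts (-p) ` F ` br w"
  have "compactin (subtopology euclideanreal {0..1}) {lo i j..d}"
    using lh d by (simp add: compactin_subtopology)
  then have "compactin XT (gam i ` {lo i j..d})" by (rule image_compactin[OF _ gam_cont[OF i]])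
  then have "compactin XT (F ` gam i ` {lo i j..d})" by (rule image_compactin[OF _ cont])
  then have cC: "compactin XT C" unfolding C_def bw by (rule image_compactin[OF _ ts_cont])
  have "connectedin XT (gam i ` {lo i j..d})" using conn_Icc[OF i] lh d by simp
  then have "connectedin XT (F ` gam i ` {lo i j..d})" by (rule connectedin_continuous_map_image[OF cont])
  then have kC: "connectedin XT C" unfolding C_def bw by (rule connectedin_continuous_map_image[OF ts_cont])
  have sub: "C \<subseteq> Br (lab i j) \<union> ITR"
  proof
    fix c assume "c \<in> C"
    then obtain z where z: "z \<in> br w" "c = ts (-p) (F z)" unfolding C_def by blast
    have zX: "z \<in> Xp i j" using bra_sub[OF w] lw z(1) by auto
    have Fz: "F z \<in> ts p ` Br (lab i j) \<union> ITR" using bp_lab(2)[OF ij] zX p_def by blast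
    show "c \<in> Br (lab i j) \<union> ITR"
    proof (cases "F z \<in> ITR")
      case True then show ?thesis using z(2) ITR_tsI by simp
    next
      case False
      then obtain g where g: "g \<in> Br (lab i j)" "F z = ts p g" using Fz by blast
      then have "c = g" using z(2) ts_inv Br_top[OF l] by auto
      then show ?thesis using g by blast
    qed
  qed
  have "gam i (lo i j) \<in> br w" unfolding bw using d by simp
  moreover have "ts (-p) (F (gam i (lo i j))) = gam (lab i j) 0"
    using lh(5) ts_inv gam_top[OF l] p_def by simp
  ultimately have g0: "gam (lab i j) 0 \<in> C" unfolding C_def by (metis image_eqI)
  show ?thesis using IS[OF l cC kC sub g0] unfolding C_def p_def .
qed

lemma INV: assumes "valid w" "br w \<noteq> {}"
  shows "\<exists>d. lo (fst (last w)) (snd (last w)) \<le> d \<and> d \<le> hi (fst (last w)) (snd (last w)) \<and>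
             br w = gam (fst (last w)) ` {lo (fst (last w)) (snd (last w))..d}"
  using assms
proof (induction w rule: rev_induct)
  case Nil then show ?case by (simp add: valid_def)
next
  case (snoc B w)
  have B: "B \<in> PI" using snoc.prems unfolding valid_def by simp
  obtain l k where lk: "B = (l,k)" by (cases B)
  note lh' = lohi[OF B[unfolded lk]]
  show ?case
  proof (cases "w = []")
    case True
    then show ?thesis using R0[OF B] lk lh' by auto
  next
    case False
    then have w: "valid w" using snoc.prems unfolding valid_def by simp
    obtain i j where lw: "last w = (i,j)" by (cases "last w")
    obtain y where y: "y \<in> br (w @ [B])" using snoc.prems by blast
    have r: "fst B = lab i j" "y \<in> ts (-(sh i j)) ` F ` br w" using R1a[OF w lw B y] by auto
    then have "br w \<noteq> {}" by blast
    then obtain d where d: "lo i j \<le> d" "d \<le> hi i j" "br w = gam i ` {lo i j..d}"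
      using snoc.IH w lw by auto
    obtain s where s: "s \<in> {0..1}" "(ts (-(sh i j)) ` F ` br w) \<inter> Br (lab i j) = gam (lab i j) ` {0..s}"
      using CS[OF w lw d(3) d(1) d(2)] by blast
    have ll: "l = lab i j" using r(1) lk by simp
    have l: "l \<in> \<Lambda>" using pidx_L[OF B] lk by simp
    have XB: "XP B = gam l ` {lo l k..hi l k}" using lh'(4) lk by simp
    have XBr: "XP B \<subseteq> Br l" using Xp_Br[OF B] lk by simp
    have "br (w @ [B]) = ts (-(sh i j)) ` F ` br w \<inter> XP B" by (rule brC[OF w lw B r(1)])
    also have "\<dots> = (ts (-(sh i j)) ` F ` br w \<inter> Br l) \<inter> XP B" using XBr by blast
    also have "\<dots> = gam l ` {0..s} \<inter> gam l ` {lo l k..hi l k}" using s(2) ll XB by simp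
    also have "\<dots> = gam l ` ({0..s} \<inter> {lo l k..hi l k})"
      using inj_on_image_Int[OF gam_inj[OF l], of "{0..s}" "{lo l k..hi l k}"] s(1) lh' by auto
    also have "{0..s} \<inter> {lo l k..hi l k} = {lo l k..min s (hi l k)}" using lh' by auto
    finally have e: "br (w @ [B]) = gam l ` {lo l k..min s (hi l k)}" .
    then have "lo l k \<le> min s (hi l k)" using snoc.prems by (metis atLeastatMost_empty' image_empty)
    moreover have "min s (hi l k) \<le> hi l k" by simp
    ultimately show ?thesis using e lk by (intro exI[of _ "min s (hi l k)"]) simp
  qed
qed

end

context LG begin

abbreviation "sim \<equiv> simr XT h \<tau> F Xp"
abbreviation "CL \<equiv> cls XT h \<tau> F \<Lambda> N Xp"

lemma sim_bra: assumes a: "valid as" and b: "valid bs" and s: "sim as bs"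
  shows "br as = br bs"
proof -
  define n where "n = length as - 1"
  define m where "m = length bs - 1"
  have la: "length as = Suc n" using a unfolding valid_def n_def by (cases as) auto
  have lb: "length bs = Suc m" using b unfolding valid_def m_def by (cases bs) auto
  obtain k where k: "k \<le> min n m" "\<forall>i \<le> k. as ! (n - i) = bs ! (m - i)"
    "br (take (n - k + 1) as) = XP (as ! (n - k))" "br (take (m - k + 1) bs) = XP (bs ! (m - k))"
    using s unfolding simr_def Let_def n_def m_def by blast
  have "br as = br (drop (n - k) as)"
    by (rule restart[OF a]) (use la k(3) in auto)
  moreover have "br bs = br (drop (m - k) bs)"
    by (rule restart[OF b]) (use lb k(4) in auto)
  moreover have "drop (n - k) as = drop (m - k) bs"
  proof (rule nth_equalityI)
    show "length (drop (n - k) as) = length (drop (m - k) bs)" using la lb k(1) by simp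
    fix i assume "i < length (drop (n - k) as)"
    then have i: "i \<le> k" using la k(1) by simp
    have "drop (n - k) as ! i = as ! (n - (k - i))" using la k(1) i
      by (simp add: nth_drop)
    also have "\<dots> = bs ! (m - (k - i))" using k(2)[rule_format, of "k - i"] by simp
    also have "\<dots> = drop (m - k) bs ! i" using lb k(1) i
      by (simp add: nth_drop)
    finally show "drop (n - k) as ! i = drop (m - k) bs ! i" .
  qed
  ultimately show ?thesis by simp
qed

lemma sim_refl: assumes a: "valid as" shows "sim as as"
proof -
  define n where "n = length as - 1"
  have la: "length as = Suc n" using a unfolding valid_def n_def by (cases as) auto
  have a0: "as ! 0 \<in> PI" using a la unfolding valid_def by (metis nth_mem subsetD zero_less_Suc)
  have "take 1 as = [as ! 0]" using la by (cases as) auto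
  then have "br (take (n - n + 1) as) = XP (as ! (n - n))" using R0[OF a0] by simp
  then show ?thesis unfolding simr_def Let_def n_def[symmetric] using a unfolding valid_def
    by (intro conjI; simp?) (intro exI[of _ n]; simp)
qed

lemma vertex_bra: assumes w: "valid w" and V: "CL w \<in> cg_vertices XT h \<tau> F \<Lambda> N Xp"
  shows "br w \<noteq> {}"
proof -
  obtain bs where bs: "CL w = CL bs" "bs \<noteq> []" "set bs \<subseteq> PI" "br bs \<noteq> {}"
    using V unfolding cg_vertices_def by blast
  have vb: "valid bs" using bs unfolding valid_def by simp
  have "bs \<in> CL bs" unfolding cls_def using sim_refl[OF vb] bs(3) by simp
  then have "bs \<in> CL w" using bs(1) by simp
  then have "sim w bs" unfolding cls_def by simp
  then show ?thesis using sim_bra[OF w vb] bs(4) by simp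
qed

lemma cls_full: assumes w: "valid w" and e: "br w = XP (last w)"
  shows "CL w = CL [last w]"
proof -
  define n where "n = length w - 1"
  have la: "length w = Suc n" using w unfolding valid_def n_def by (cases w) auto
  have lw: "last w = w ! n" using la w unfolding valid_def by (simp add: last_conv_nth)
  have lp: "last w \<in> PI" using last_PI[OF w] .
  have "sim w bs \<longleftrightarrow> sim [last w] bs" if bs: "set bs \<subseteq> PI" for bs
  proof
    assume s: "sim w bs"
    define m where "m = length bs - 1"
    have bne: "bs \<noteq> []" using s unfolding simr_def by simp
    then have lb: "length bs = Suc m" unfolding m_def by (cases bs) auto
    have vb: "valid bs" using bne bs unfolding valid_def by simp
    obtain k where k: "\<forall>i \<le> k. w ! (n - i) = bs ! (m - i)"
      using s unfolding simr_def Let_def n_def m_def by blast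
    have lbs: "bs ! m = last w" using k lw by auto
    have "br bs = XP (bs ! m)" using sim_bra[OF w vb s] e lbs by simp
    moreover have "take (m + 1) bs = bs" using lb by simp
    moreover have "br [last w] = XP (last w)" using R0[OF lp] .
    ultimately have ex: "\<exists>k\<le>min 0 m. (\<forall>i\<le>k. [last w] ! (0 - i) = bs ! (m - i)) \<and>
       br (take (0 - k + 1) [last w]) = XP ([last w] ! (0 - k)) \<and> br (take (m - k + 1) bs) = XP (bs ! (m - k))"
      using lbs by (intro exI[of _ 0]) simp
    show "sim [last w] bs" unfolding simr_def Let_def using ex[unfolded m_def] bne by auto
  next
    assume s: "sim [last w] bs"
    define m where "m = length bs - 1"
    have bne: "bs \<noteq> []" using s unfolding simr_def by simp
    then have lb: "length bs = Suc m" unfolding m_def by (cases bs) auto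
    obtain k where kk: "k \<le> min (length [last w] - 1) (length bs - 1)"
      "\<forall>i\<le>k. [last w] ! (length [last w] - 1 - i) = bs ! (length bs - 1 - i)"
      "br (take (length bs - 1 - k + 1) bs) = XP (bs ! (length bs - 1 - k))"
      using s unfolding simr_def Let_def by blast
    have k0: "k = 0" using kk(1) by simp
    have k: "last w = bs ! m" "br (take (m + 1) bs) = XP (bs ! m)"
      using kk(2)[rule_format, of 0] kk(3) k0 unfolding m_def by simp_all
    have "take (m + 1) bs = bs" using lb by simp
    then have "br bs = XP (bs ! m)" using k(2) by simp
    moreover have "take (n + 1) w = w" using la by simp
    ultimately show "sim w bs" unfolding simr_def Let_def m_def[symmetric] n_def[symmetric]
      using bne w k(1) lw e lb unfolding valid_def by (intro conjI; simp?) (intro exI[of _ 0]; simp)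
  qed
  then show ?thesis unfolding cls_def by blast
qed

end

context LG begin

lemma main:
  assumes arr: "cg_arrow XT h \<tau> F \<Lambda> N Xp \<alpha> \<beta>"
  shows "\<exists>as k. as \<noteq> [] \<and> set as \<subseteq> pidx \<Lambda> N \<and>
           (let i = fst (last as); j = snd (last as); l = lab i j in
              1 \<le> k \<and> k \<le> N l \<and>
              \<alpha> = cls XT h \<tau> F \<Lambda> N Xp as \<and>
              \<beta> = cls XT h \<tau> F \<Lambda> N Xp (as @ [(l, k)]) \<and>
              (\<forall>j' \<in> {1..<k}.
                 pos_covers XT \<tau> F gam i (bra XT h \<tau> F Xp as) l (Xp l j') 1 (sh i j) \<and>
                 cg_arrow XT h \<tau> F \<Lambda> N Xp \<alpha> (cls XT h \<tau> F \<Lambda> N Xp [(l, j')])))"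
proof -
  obtain as a where A: "\<alpha> \<in> cg_vertices XT h \<tau> F \<Lambda> N Xp" "\<beta> \<in> cg_vertices XT h \<tau> F \<Lambda> N Xp"
    "as \<noteq> []" "set as \<subseteq> PI" "a \<in> PI" "\<alpha> = CL as" "\<beta> = CL (as @ [a])"
    using arr unfolding cg_arrow_def by blast
  have va: "valid as" using A unfolding valid_def by simp
  have vaa: "valid (as @ [a])" using A unfolding valid_def by simp
  have bas: "br as \<noteq> {}" using vertex_bra[OF va] A(1,6) by simp
  have baa: "br (as @ [a]) \<noteq> {}" using vertex_bra[OF vaa] A(2,7) by simp
  obtain i j where lw: "last as = (i,j)" by (cases "last as")
  have ij: "(i,j) \<in> PI" using last_PI[OF va] lw by simp
  define l where "l = lab i j"
  define p where "p = sh i j"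
  have l: "l \<in> \<Lambda>" using bp_lab(1)[OF ij] l_def by simp
  obtain y where y: "y \<in> br (as @ [a])" using baa by blast
  have r: "fst a = l" "y \<in> ts (-p) ` F ` br as" using R1a[OF va lw A(5) y] l_def p_def by auto
  define k where "k = snd a"
  have ak: "a = (l, k)" using r(1) k_def by (cases a) simp
  have kN: "1 \<le> k" "k \<le> N l" using A(5) ak by (auto simp: pidx_def)
  obtain d where d: "lo i j \<le> d" "d \<le> hi i j" "br as = gam i ` {lo i j..d}"
    using INV[OF va bas] lw by auto
  obtain s where s: "s \<in> {0..1}" "(ts (-p) ` F ` br as) \<inter> Br l = gam l ` {0..s}"
    using CS[OF va lw d(3) d(1) d(2)] l_def p_def by blast
  have lk: "(l,k) \<in> PI" using A(5) ak by simp
  note lhk = lohi[OF lk]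
  note lhij = lohi[OF ij]
  have "y \<in> XP a" using bra_sub[OF vaa] y by auto
  then obtain v where v: "v \<in> {lo l k..hi l k}" "y = gam l v" using lhk(4) ak by auto
  have v01: "v \<in> {0..1}" using v(1) lhk by auto
  obtain z where z: "z \<in> br as" "y = ts (-p) (F z)" using r(2) by blast
  obtain t where t: "t \<in> {lo i j..d}" "z = gam i t" using z(1) d(3) by blast
  have "y \<in> Br l" using v v01 unfolding Br_def by blast
  then have "y \<in> gam l ` {0..s}" using s(2) r(2) by blast
  then obtain v' where v': "v' \<in> {0..s}" "y = gam l v'" by blast
  have "v = v'" using gam_inj[OF l] v v01 v' s(1) by (auto dest: inj_onD)
  then have vs: "v \<le> s" using v' by simp
  have i: "i \<in> \<Lambda>" using pidx_L[OF ij] by simp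
  have F0: "ts (-p) (F (gam i (lo i j))) = gam l 0" using lhij(5) ts_inv gam_top[OF l] l_def p_def by simp
  have rb0: "rbr gam l (gam l 0) = gam l 0" unfolding rbr_def by auto
  have rby: "rbr gam l y = gam l v" using v v01 unfolding rbr_def by auto
  have jprop: "pos_covers XT \<tau> F gam i (br as) l (Xp l j') 1 p \<and>
               cg_arrow XT h \<tau> F \<Lambda> N Xp \<alpha> (CL [(l, j')])" if j': "j' \<in> {1..<k}" for j'
  proof -
    have lj: "(l,j') \<in> PI" using j' kN l by (auto simp: pidx_def)
    note lh = lohi[OF lj]
    have "gam l (hi l j') \<in> Xp l j'" using lh by auto
    moreover have "gam l v \<in> Xp l k" using lhk v by auto
    ultimately have hv: "hi l j' < v" using bp_order[OF l _ _ _ _ v01] j' kN lh by auto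
    have pc: "pos_covers XT \<tau> F gam i (br as) l (Xp l j') 1 p"
      unfolding pos_covers_def
    proof (intro conjI exI)
      show "(1::nat) \<le> 1" by simp
      show "0 \<le> lo i j" "lo i j \<le> d" "d \<le> 1" "br as = gam i ` {lo i j..d}"
        using lhij d by auto
      show "0 \<le> lo l j'" "lo l j' \<le> hi l j'" "hi l j' \<le> 1" "Xp l j' = gam l ` {lo l j'..hi l j'}"
        using lh by auto
      show "lo i j \<le> lo i j" "lo i j \<le> t" "t \<le> d" using t by auto
      show "\<exists>u\<in>{0..1}. rbr gam l (tshift XT \<tau> (- p) ((F ^^ 1) (gam i (lo i j)))) = gam l u \<and> u \<le> lo l j'"
        using F0 rb0 lh by (intro bexI[of _ 0]) auto
      show "\<exists>w\<in>{0..1}. rbr gam l (tshift XT \<tau> (- p) ((F ^^ 1) (gam i t))) = gam l w \<and> hi l j' \<le> w"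
        using rby z t v01 hv by (intro bexI[of _ v]) auto
    qed
    have vl: "valid (as @ [(l,j')])" using va lj unfolding valid_def by simp
    have "br (as @ [(l,j')]) = ts (-p) ` F ` br as \<inter> Xp l j'"
      using brC[OF va lw lj] l_def p_def by simp
    also have "\<dots> = Xp l j'"
    proof -
      have "{lo l j'..hi l j'} \<subseteq> {0..s}" using lh hv vs by auto
      then have "Xp l j' \<subseteq> gam l ` {0..s}" using lh(4) by blast
      then show ?thesis using s(2) by blast
    qed
    finally have "br (as @ [(l,j')]) = XP (last (as @ [(l,j')]))" by simp
    then have e: "CL (as @ [(l,j')]) = CL [(l,j')]" using cls_full[OF vl] by simp
    have "gam l (lo l j') \<in> Xp l j'" using lh by auto
    then have "br [(l,j')] \<noteq> {}" using R0[OF lj] by auto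
    then have V: "CL [(l,j')] \<in> cg_vertices XT h \<tau> F \<Lambda> N Xp"
      unfolding cg_vertices_def using lj by auto
    have "cg_arrow XT h \<tau> F \<Lambda> N Xp \<alpha> (CL [(l, j')])"
      unfolding cg_arrow_def using A(1) V A(3,4) lj A(6) e by blast
    then show ?thesis using pc by simp
  qed
  show ?thesis
    using A(3,4,6,7) ak kN jprop lw l_def p_def by (intro exI[of _ as] exI[of _ k]) (simp add: Let_def)
qed

end

theorem mainTheorem13:
  fixes XT :: "'a topology" and h :: "real \<Rightarrow> 'a" and \<tau> F :: "'a \<Rightarrow> 'a"
    and \<Lambda> :: "'i set" and gam :: "'i \<Rightarrow> real \<Rightarrow> 'a"
    and N :: "'i \<Rightarrow> nat" and Xp :: "'i \<Rightarrow> nat \<Rightarrow> 'a set"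
    and lab :: "'i \<Rightarrow> nat \<Rightarrow> 'i" and sh :: "'i \<Rightarrow> nat \<Rightarrow> int"
    and \<alpha> \<beta> :: "('i \<times> nat) list set"
  assumes "lifted_graph XT h \<tau>"
    and "continuous_map XT XT F"
    and "degree_one XT \<tau> F"
    and "sun_like XT h F \<Lambda> gam"
    and "basic_partition XT h \<tau> F \<Lambda> gam N Xp lab sh"
    and "cg_arrow XT h \<tau> F \<Lambda> N Xp \<alpha> \<beta>"
  shows "\<exists>as k. as \<noteq> [] \<and> set as \<subseteq> pidx \<Lambda> N \<and>
           (let i = fst (last as); j = snd (last as); l = lab i j in
              1 \<le> k \<and> k \<le> N l \<and>
              \<alpha> = cls XT h \<tau> F \<Lambda> N Xp as \<and>
              \<beta> = cls XT h \<tau> F \<Lambda> N Xp (as @ [(l, k)]) \<and>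
              (\<forall>j' \<in> {1..<k}.
                 pos_covers XT \<tau> F gam i (bra XT h \<tau> F Xp as) l (Xp l j') 1 (sh i j) \<and>
                 cg_arrow XT h \<tau> F \<Lambda> N Xp \<alpha> (cls XT h \<tau> F \<Lambda> N Xp [(l, j')])))"
proof -
  interpret LG XT h \<tau> F \<Lambda> gam N Xp lab sh
    using assms(1-5) by unfold_locales
  show ?thesis by (rule main[OF assms(6)])
qed

end
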